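(* Let $g_1,\dots,g_r\in\mathbb R[X_1,\dots,X_n]$ satisfy $1-\|\mathbf X\|_2^2\in\mathcal Q(\mathbf g)$ and $\|g_i\|\le\tfrac12$, with $S=\mathcal S(\mathbf g)\ne\emptyset$. Let $f\in\mathbb R[\mathbf X]$ with $f^*=\min_S f>0$, let $A=\{x\in[-1,1]^n: f(x)\le\frac{3f^*}{4}\}$, and let $0<\delta\le 1$ be such that $G(x)\ge\delta$ for all $x\in A$. Let $k>0$, $m\in\mathbb N$ and let $h_{k,m}\in\mathbb R[T]$ be a univariate polynomial of degree $m$ such that: $1-\frac1k\le h_{k,m}(t)\le1+\frac1k$ for $t\in[-1,-\delta]$; $h_{k,m}(t)\le\frac2k$ for $t\in[0,1]$; $0\le h_{k,m}(t)\le1+\frac1k$ for $t\in[-1,1]$. Let $s>0$. If $$s>\frac{6\|f\|}{\delta},\qquad k>\frac{2r-2}{\delta}+1,\qquad k>\frac{4rs}{f^*},$$ then $p=f-s\sum_{i=1}^r h_{k,m}(g_i)\,g_i$ satisfies $p\ge\frac{f^*}{2}$ on $[-1,1]^n$.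
   Context: $\Sigma^2$ sums of squares, $\mathcal S(\mathbf g)=\{x:g_i(x)\ge0\ \forall i\}$, $\mathcal Q(\mathbf g)=\Sigma^2+\sum_i\Sigma^2g_i$, $\|h\|=\max_{[-1,1]^n}|h|$, $\|\mathbf X\|_2^2=\sum X_i^2$, $G(x)=|\min\{g_1(x),\dots,g_r(x),0\}|$. *)

theory Defs
  imports "HOL-Analysis.Analysis" "HOL-Computational_Algebra.Polynomial"
begin

definition poly_fun :: "(real^'n \<Rightarrow> real) \<Rightarrow> bool" where
  "poly_fun f \<longleftrightarrow> (\<exists>M c. finite M \<and>
     (\<forall>x. f x = (\<Sum>\<alpha>\<in>M. c \<alpha> * (\<Prod>i\<in>UNIV. (x $ i) ^ (\<alpha> i)))))"

definition sos_fun :: "(real^'n \<Rightarrow> real) \<Rightarrow> bool" where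
  "sos_fun f \<longleftrightarrow> (\<exists>qs. list_all poly_fun qs \<and>
     (\<forall>x. f x = sum_list (map (\<lambda>q. (q x)^2) qs)))"

definition in_quadmodule :: "(real^'n \<Rightarrow> real) \<Rightarrow> nat \<Rightarrow> (nat \<Rightarrow> real^'n \<Rightarrow> real) \<Rightarrow> bool" where
  "in_quadmodule f r g \<longleftrightarrow> (\<exists>\<sigma>. (\<forall>i\<in>{0..r}. sos_fun (\<sigma> i)) \<and>
     (\<forall>x. f x = \<sigma> 0 x + (\<Sum>i=1..r. \<sigma> i x * g i x)))"

definition semialg :: "nat \<Rightarrow> (nat \<Rightarrow> real^'n \<Rightarrow> real) \<Rightarrow> (real^'n) set" where
  "semialg r g = {x. \<forall>i\<in>{1..r}. g i x \<ge> 0}"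

definition cube :: "(real^'n) set" where
  "cube = {x. \<forall>i. \<bar>x $ i\<bar> \<le> 1}"

definition cube_norm :: "(real^'n \<Rightarrow> real) \<Rightarrow> real" where
  "cube_norm h = Sup ((\<lambda>x. \<bar>h x\<bar>) ` cube)"

definition Gfun :: "nat \<Rightarrow> (nat \<Rightarrow> real^'n \<Rightarrow> real) \<Rightarrow> real^'n \<Rightarrow> real" where
  "Gfun r g x = \<bar>Min (insert 0 ((\<lambda>i. g i x) ` {1..r}))\<bar>"

end

theory Submission
  imports Defs
begin

lemma poly_fun_cube_bound:
  fixes f :: "real^'n \<Rightarrow> real"
  assumes "poly_fun f" "x \<in> cube"
  shows "\<bar>f x\<bar> \<le> cube_norm f"
proof -
  obtain M c where M: "finite M" "\<And>x. f x = (\<Sum>\<alpha>\<in>M. c \<alpha> * (\<Prod>i\<in>UNIV. (x $ i) ^ (\<alpha> i)))"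
    using assms(1) unfolding poly_fun_def by blast
  have bnd: "\<bar>f y\<bar> \<le> (\<Sum>\<alpha>\<in>M. \<bar>c \<alpha>\<bar>)" if "y \<in> cube" for y
  proof -
    have "\<bar>f y\<bar> \<le> (\<Sum>\<alpha>\<in>M. \<bar>c \<alpha> * (\<Prod>i\<in>UNIV. (y $ i) ^ (\<alpha> i))\<bar>)"
      unfolding M(2) by (rule sum_abs)
    also have "\<dots> \<le> (\<Sum>\<alpha>\<in>M. \<bar>c \<alpha>\<bar>)"
    proof (rule sum_mono)
      fix \<alpha> assume "\<alpha> \<in> M"
      have "\<bar>(\<Prod>i\<in>UNIV. (y $ i) ^ (\<alpha> i))\<bar> = (\<Prod>i\<in>UNIV. \<bar>y $ i\<bar> ^ (\<alpha> i))"
        by (simp add: abs_prod power_abs)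
      also have "\<dots> \<le> 1"
        using that unfolding cube_def by (intro prod_le_1) (auto intro: power_le_one)
      finally show "\<bar>c \<alpha> * (\<Prod>i\<in>UNIV. (y $ i) ^ (\<alpha> i))\<bar> \<le> \<bar>c \<alpha>\<bar>"
        by (simp add: abs_mult mult_left_le)
    qed
    finally show ?thesis .
  qed
  have "bdd_above ((\<lambda>x. \<bar>f x\<bar>) ` cube)"
    using bnd by (auto intro!: bdd_aboveI)
  then show ?thesis unfolding cube_norm_def using assms(2) by (auto intro: cSup_upper)
qed

theorem mainTheorem8:
  fixes g :: "nat \<Rightarrow> real^'n \<Rightarrow> real" and r :: nat
    and f :: "real^'n \<Rightarrow> real" and fstar \<delta> k s :: real
    and m :: nat and h :: "real poly"
  assumes g_poly: "\<forall>i\<in>{1..r}. poly_fun (g i)"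
    and arch: "in_quadmodule (\<lambda>x. 1 - (\<Sum>j\<in>UNIV. (x $ j)^2)) r g"
    and g_norm: "\<forall>i\<in>{1..r}. cube_norm (g i) \<le> 1/2"
    and S_ne: "semialg r g \<noteq> {}"
    and f_poly: "poly_fun f"
    and fstar_min: "(\<exists>x\<in>semialg r g. f x = fstar) \<and> (\<forall>x\<in>semialg r g. fstar \<le> f x)"
    and fstar_pos: "fstar > 0"
    and delta: "0 < \<delta>" "\<delta> \<le> 1"
    and G_bound: "\<forall>x\<in>{x\<in>cube. f x \<le> 3 * fstar / 4}. Gfun r g x \<ge> \<delta>"
    and k_pos: "k > 0"
    and h_deg: "degree h = m"
    and h1: "\<forall>t\<in>{-1..-\<delta>}. 1 - 1/k \<le> poly h t \<and> poly h t \<le> 1 + 1/k"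
    and h2: "\<forall>t\<in>{0..1}. poly h t \<le> 2/k"
    and h3: "\<forall>t\<in>{-1..1}. 0 \<le> poly h t \<and> poly h t \<le> 1 + 1/k"
    and s_pos: "s > 0"
    and s_big: "s > 6 * cube_norm f / \<delta>"
    and k_big1: "k > (2 * real r - 2) / \<delta> + 1"
    and k_big2: "k > 4 * real r * s / fstar"
  shows "\<forall>x\<in>cube. f x - s * (\<Sum>i=1..r. poly h (g i x) * g i x) \<ge> fstar / 2"
proof
  fix x :: "real^'n" assume xc: "x \<in> cube"
  define T where "T i = poly h (g i x) * g i x" for i
  have gb: "\<bar>g i x\<bar> \<le> 1/2" if "i \<in> {1..r}" for i
    using poly_fun_cube_bound[OF _ xc, of "g i"] g_poly g_norm that by force
  have fb: "\<bar>f y\<bar> \<le> cube_norm f" if "y \<in> cube" for y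
    using poly_fun_cube_bound[OF f_poly that] .
  have hnn: "poly h (g i x) \<ge> 0" if iin: "i \<in> {1..r}" for i
  proof -
    have "g i x \<in> {-1..1}" using gb[OF iin] by auto
    thus ?thesis using h3 by blast
  qed
  obtain x0 where x0: "x0 \<in> semialg r g" "f x0 = fstar" using fstar_min by blast
  obtain \<sigma> where sig: "\<forall>i\<in>{0..r}. sos_fun (\<sigma> i)"
    "\<forall>y. 1 - (\<Sum>j\<in>UNIV. (y $ j)^2) = \<sigma> 0 y + (\<Sum>i=1..r. \<sigma> i y * g i y)"
    using arch unfolding in_quadmodule_def by (elim exE conjE) assumption
  have sos_nn: "\<sigma> i y \<ge> 0" if iin: "i \<in> {0..r}" for i y
  proof -
    obtain qs where "\<forall>y. \<sigma> i y = sum_list (map (\<lambda>q. (q y)^2) qs)"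
      using sig(1) iin unfolding sos_fun_def by meson
    moreover have "0 \<le> sum_list (map (\<lambda>q. (q y)^2) qs)"
      by (rule sum_list_nonneg) auto
    ultimately show ?thesis by simp
  qed
  have "0 \<le> \<sigma> 0 x0 + (\<Sum>i=1..r. \<sigma> i x0 * g i x0)"
    using x0(1) sos_nn unfolding semialg_def
    by (intro add_nonneg_nonneg sum_nonneg mult_nonneg_nonneg) auto
  moreover have "1 - (\<Sum>j\<in>UNIV. (x0 $ j)^2) = \<sigma> 0 x0 + (\<Sum>i=1..r. \<sigma> i x0 * g i x0)"
    using sig(2) by blast
  ultimately have sq: "(\<Sum>j\<in>UNIV. (x0 $ j)^2) \<le> 1" by linarith
  have "x0 \<in> cube" unfolding cube_def
  proof (intro CollectI allI)
    fix j
    have "(x0 $ j)^2 \<le> (\<Sum>j\<in>UNIV. (x0 $ j)^2)"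
      by (rule member_le_sum) auto
    hence "(x0 $ j)^2 \<le> 1" using sq by linarith
    thus "\<bar>x0 $ j\<bar> \<le> 1" by (simp add: abs_square_le_1)
  qed
  hence fs_le: "fstar \<le> cube_norm f" using fb[of x0] x0 by simp
  have fx: "- cube_norm f \<le> f x" using fb[OF xc] by simp
  have Tle: "T i \<le> 1/k" if "i \<in> {1..r}" for i
  proof (cases "g i x \<ge> 0")
    case True
    have "g i x \<in> {0..1}" using gb[OF that] True by auto
    hence "poly h (g i x) \<le> 2/k" using h2 by blast
    moreover have "poly h (g i x) \<ge> 0" using hnn[OF that] .
    ultimately have "T i \<le> 2/k * g i x" unfolding T_def using True
      by (intro mult_right_mono) auto
    also have "\<dots> \<le> 2/k * (1/2)" using gb[OF that] k_pos by (intro mult_left_mono) auto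
    finally show ?thesis by simp
  next
    case False
    have "poly h (g i x) \<ge> 0" using hnn[OF that] .
    hence "T i \<le> 0" unfolding T_def using False by (simp add: mult_nonneg_nonpos)
    moreover have "1/k > 0" using k_pos by simp
    ultimately show ?thesis by linarith
  qed
  have sumle: "(\<Sum>i=1..r. T i) \<le> real r * (1/k)"
    using sum_bounded_above[of "{1..r}" T "1/k"] Tle by auto
  show "f x - s * (\<Sum>i=1..r. poly h (g i x) * g i x) \<ge> fstar / 2"
  proof (cases "f x \<le> 3 * fstar / 4")
    case False
    have "s * (real r * (1/k)) \<le> fstar / 4"
    proof -
      have "4 * real r * s / fstar \<le> k" using k_big2 by simp
      hence "4 * real r * s \<le> k * fstar" using fstar_pos by (simp add: divide_le_eq)
      thus ?thesis using k_pos by (simp add: field_simps)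
    qed
    moreover have "s * (\<Sum>i=1..r. T i) \<le> s * (real r * (1/k))"
      using sumle s_pos by (intro mult_left_mono) auto
    ultimately show ?thesis using False unfolding T_def by linarith
  next
    case True
    hence "Gfun r g x \<ge> \<delta>" using G_bound xc by auto
    define Mn where "Mn = Min (insert 0 ((\<lambda>i. g i x) ` {1..r}))"
    have Mn0: "Mn \<le> 0" unfolding Mn_def by (intro Min_le) auto
    have "\<bar>Mn\<bar> \<ge> \<delta>" using \<open>Gfun r g x \<ge> \<delta>\<close> unfolding Gfun_def Mn_def by simp
    hence Mnd: "Mn \<le> -\<delta>" using Mn0 by linarith
    have "Mn \<in> insert 0 ((\<lambda>i. g i x) ` {1..r})" unfolding Mn_def by (intro Min_in) auto
    then obtain j where j: "j \<in> {1..r}" "g j x = Mn" using Mnd delta by auto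
    have r1: "r \<ge> 1" using j(1) by auto
    have cn: "cube_norm f > 0" using fs_le fstar_pos by linarith
    have "cube_norm f / \<delta> \<ge> cube_norm f" using cn delta by (simp add: le_divide_eq)
    hence "6 * cube_norm f / \<delta> \<ge> 6 * fstar" using fs_le by simp
    hence s6: "s > 6 * fstar" using s_big by linarith
    have "4 * real r * s / fstar \<ge> 4 * s / fstar" using r1 fstar_pos s_pos
      by (intro divide_right_mono) auto
    moreover have "4 * s / fstar > 24" using s6 fstar_pos by (simp add: field_simps)
    ultimately have k24: "k > 24" using k_big2 by linarith
    have gjr: "g j x \<in> {-1..-\<delta>}" using gb[OF j(1)] j(2) Mnd by auto
    have hj: "poly h (g j x) \<ge> 1 - 1/k" using h1 gjr by blast
    have k1: "1 - 1/k \<ge> 0" using k24 by simp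
    have "T j \<le> (1 - 1/k) * g j x" unfolding T_def using hj gjr delta
      by (intro mult_right_mono_neg) auto
    also have "\<dots> \<le> (1 - 1/k) * (-\<delta>)" using gjr k1 by (intro mult_left_mono) auto
    finally have Tj: "T j \<le> -((1 - 1/k) * \<delta>)" by simp
    have rest: "(\<Sum>i\<in>{1..r}-{j}. T i) \<le> real (r - 1) * (1/k)"
      using sum_bounded_above[of "{1..r}-{j}" T "1/k"] Tle j(1) by auto
    have "(\<Sum>i=1..r. T i) = T j + (\<Sum>i\<in>{1..r}-{j}. T i)"
      using j(1) by (simp add: sum.remove)
    hence Sle: "(\<Sum>i=1..r. T i) \<le> -((1 - 1/k) * \<delta>) + (real r - 1) / k"
      using Tj rest r1 by (simp add: of_nat_diff)
    define X where "X = (1 - 1/k) * \<delta> - (real r - 1) / k"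
    have "(k - 1) * \<delta> > 2 * real r - 2"
      using k_big1 delta by (simp add: field_simps)
    hence e1: "k * \<delta> - \<delta> > 2 * real r - 2" by (simp add: algebra_simps)
    have e2: "k * \<delta> \<ge> 2 * \<delta>" using k24 delta by (intro mult_right_mono) auto
    have "X * k = k * \<delta> - \<delta> - (real r - 1)" unfolding X_def using k_pos
      by (simp add: field_simps)
    also have "\<dots> \<ge> (k * \<delta>) / 4" using e1 e2 by linarith
    also have "(k * \<delta>) / 4 = (\<delta> / 4) * k" by simp
    finally have "X * k \<ge> (\<delta> / 4) * k" .
    hence "X \<ge> \<delta> / 4" using k_pos by simp
    have "s * X \<ge> (6 * cube_norm f / \<delta>) * (\<delta> / 4)"
      using s_big \<open>X \<ge> \<delta> / 4\<close> delta fs_le fstar_pos s_pos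
      by (intro mult_mono) auto
    hence sX: "s * X \<ge> 3/2 * cube_norm f" using delta by (simp add: field_simps)
    have "s * (\<Sum>i=1..r. T i) \<le> s * (-X)" using Sle s_pos unfolding X_def
      by (intro mult_left_mono) auto
    thus ?thesis using sX fx fs_le unfolding T_def by linarith
  qed
qed

end
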